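(* Let $\mathbb{F}$ be a field of characteristic not equal to $2$, and let $\ell_1,\ell_2,\ell_3 \in \mathbb{F}$ with $\ell_1 \ne 0$. Let $x_1,x_2 \in \mathbb{F}^2$ with $\|x_1-x_2\| = \ell_1$. Then the number of points $x_3 \in \mathbb{F}^2$ with $\|x_2-x_3\| = \ell_2$ and $\|x_3 - x_1\| = \ell_3$ is exactly $$\mu = \begin{cases} 2 & \text{if } 4\sigma_2-\sigma_1^2 \text{ is a nonzero square in } \mathbb{F},\\ 1 & \text{if } 4\sigma_2-\sigma_1^2 = 0,\\ 0 & \text{if } 4\sigma_2-\sigma_1^2 \text{ is a nonsquare in }\mathbb{F},\end{cases}$$ where $\sigma_1 = \ell_1+\ell_2+\ell_3$ and $\sigma_2 = \ell_1\ell_2+\ell_2\ell_3+\ell_3\ell_1$.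
   Context: For $u=(u_1,u_2), v=(v_1,v_2)\in\mathbb{F}^2$, $\|u-v\| = (u_1-v_1)^2+(u_2-v_2)^2\in\mathbb{F}$. *)

theory Defs
  imports Main
begin

definition qdist :: "'a::field \<times> 'a \<Rightarrow> 'a \<times> 'a \<Rightarrow> 'a" where
  "qdist u v = (fst u - fst v)^2 + (snd u - snd v)^2"

definition is_square :: "'a::field \<Rightarrow> bool" where
  "is_square a \<longleftrightarrow> (\<exists>b. a = b^2)"

end

theory Submission
  imports Defs
begin

lemma card_sq:
  fixes c :: "'a::field"
  assumes char: "(2::'a) \<noteq> 0"
  shows "finite {b. b^2 = c} \<and> card {b. b^2 = c} =
     (if c = 0 then 1 else if is_square c then 2 else 0)"
proof (cases "c = 0")
  case True
  then have "{b. b^2 = c} = {0::'a}" by auto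
  then show ?thesis using True by simp
next
  case False
  show ?thesis
  proof (cases "is_square c")
    case True
    then obtain r where r: "c = r^2" unfolding is_square_def by blast
    have r0: "r \<noteq> 0" using False r by auto
    have "r \<noteq> - r"
    proof
      assume "r = - r" then have "2 * r = 0" by (simp add: algebra_simps)
      then show False using r0 char by simp
    qed
    moreover have "{b. b^2 = c} = {r, -r}"
      using r by (auto simp: power2_eq_iff)
    ultimately show ?thesis using False True by simp
  next
    case nsq: False
    have "{b. b^2 = c} = {}" using nsq unfolding is_square_def by auto
    then show ?thesis using False nsq by simp
  qed
qed

theorem lemma4p1:
  fixes l1 l2 l3 :: "'a::field"
    and x1 x2 :: "'a \<times> 'a"
  assumes char: "(2::'a) \<noteq> 0"
    and l1: "l1 \<noteq> 0"
    and d12: "qdist x1 x2 = l1"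
  defines "\<sigma>1 \<equiv> l1 + l2 + l3"
    and "\<sigma>2 \<equiv> l1 * l2 + l2 * l3 + l3 * l1"
  shows "finite {x3. qdist x2 x3 = l2 \<and> qdist x3 x1 = l3}
    \<and> card {x3. qdist x2 x3 = l2 \<and> qdist x3 x1 = l3} =
      (if 4 * \<sigma>2 - \<sigma>1^2 = 0 then 1
       else if is_square (4 * \<sigma>2 - \<sigma>1^2) then 2
       else 0)"
proof -
  obtain a b where x1: "x1 = (a, b)" by (cases x1)
  obtain c d where x2: "x2 = (c, d)" by (cases x2)
  define p where "p = c - a"
  define q where "q = d - b"
  have pq: "p^2 + q^2 = l1" using d12 x1 x2 unfolding qdist_def p_def q_def
    by (simp add: power2_eq_square algebra_simps)
  define D where "D = 4 * \<sigma>2 - \<sigma>1^2"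
  have D: "D = 4*l1*l3 - (l1+l3-l2)^2"
    unfolding D_def \<sigma>1_def \<sigma>2_def by (simp add: power2_eq_square algebra_simps)
  define s where "s = (l1 + l3 - l2) / 2"
  define k where "k = D / (4 * l1^2)"
  have four: "(4::'a) \<noteq> 0" using char by (metis mult_eq_0_iff numeral_Bit0 one_add_one mult_2)
  have k: "k = (l1*l3 - s^2) / l1^2"
    unfolding k_def s_def D using char l1 four by (simp add: field_simps power2_eq_square)
  define t where "t = s/l1"
  define f where "f \<beta> = (a + t*p - \<beta>*q, b + t*q + \<beta>*p)" for \<beta>
  have inj: "inj f"
  proof (rule injI)
    fix u v assume "f u = f v"
    then have e1: "u*q = v*q" and e2: "u*p = v*p" unfolding f_def by auto
    show "u = v"
    proof (rule ccontr)
      assume "u \<noteq> v"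
      then have "q = 0" "p = 0" using e1 e2 by auto
      then show False using pq l1 by simp
    qed
  qed
  have set_eq: "{x3. qdist x2 x3 = l2 \<and> qdist x3 x1 = l3} = f ` {\<beta>. \<beta>^2 = k}"
  proof (intro set_eqI iffI)
    fix x3 assume "x3 \<in> f ` {\<beta>. \<beta>^2 = k}"
    then obtain \<beta> where hb: "\<beta>^2 = k" and x3: "x3 = f \<beta>" by auto
    have hb': "\<beta>^2 * l1^2 = l1*l3 - s^2" using hb k l1 by (simp add: field_simps)
    have q31: "qdist x3 x1 = (t^2 + \<beta>^2) * (p^2+q^2)"
      unfolding x3 x1 f_def qdist_def by (simp add: power2_eq_square algebra_simps)
    have A: "qdist x3 x1 = l3"
      unfolding q31 pq t_def using hb' l1 by (simp add: field_simps power2_eq_square)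
    have q23: "qdist x2 x3 = qdist x3 x1 - 2*t*(p^2+q^2) + (p^2+q^2)"
      unfolding x3 x1 x2 f_def qdist_def p_def q_def
      by (simp add: power2_eq_square algebra_simps)
    have "qdist x2 x3 = l2"
      unfolding q23 A pq t_def using l1 char by (simp add: s_def field_simps)
    with A show "x3 \<in> {x3. qdist x2 x3 = l2 \<and> qdist x3 x1 = l3}" by simp
  next
    fix x3 assume "x3 \<in> {x3. qdist x2 x3 = l2 \<and> qdist x3 x1 = l3}"
    then have h2: "qdist x2 x3 = l2" and h3: "qdist x3 x1 = l3" by auto
    obtain y1 y2 where x3: "x3 = (a + y1, b + y2)"
    proof
      show "x3 = (a + (fst x3 - a), b + (snd x3 - b))" by simp
    qed
    have h3': "y1^2 + y2^2 = l3" using h3 unfolding x3 x1 qdist_def by simp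
    have h2': "(p - y1)^2 + (q - y2)^2 = l2" using h2 unfolding x3 x2 qdist_def p_def q_def
      by (simp add: algebra_simps)
    have dot: "2*(p*y1 + q*y2) = l1 + l3 - l2"
      using h2' h3' pq by (simp add: power2_eq_square algebra_simps)
    define \<beta> where "\<beta> = (p*y2 - q*y1)/l1"
    have dot': "p*y1 + q*y2 = s" using dot char unfolding s_def by (simp add: field_simps)
    have lag: "(p*y2 - q*y1)^2 + (p*y1 + q*y2)^2 = (p^2+q^2)*(y1^2+y2^2)"
      by (simp add: power2_eq_square algebra_simps)
    have w: "(p*y2 - q*y1)^2 = l1*l3 - s^2"
      using lag unfolding dot' pq h3' by (simp add: algebra_simps)
    have "\<beta>^2 * l1^2 = (p*y2 - q*y1)^2"
      unfolding \<beta>_def using l1 by (simp add: power_divide)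
    then have "\<beta>^2 * l1^2 = l1*l3 - s^2" using w by simp
    moreover have "k * l1^2 = l1*l3 - s^2" using k l1 by (simp add: eq_divide_eq)
    ultimately have hb: "\<beta>^2 = k" using l1 by (metis mult_right_cancel power_not_zero)
    have y1: "y1 = t*p - \<beta>*q"
    proof -
      have "(p*y1 + q*y2)*p - (p*y2 - q*y1)*q = (p^2+q^2)*y1"
        by (simp add: power2_eq_square algebra_simps)
      then show ?thesis unfolding \<beta>_def dot' pq t_def using l1 by (simp add: field_simps)
    qed
    have y2: "y2 = t*q + \<beta>*p"
    proof -
      have "(p*y1 + q*y2)*q + (p*y2 - q*y1)*p = (p^2+q^2)*y2"
        by (simp add: power2_eq_square algebra_simps)
      then show ?thesis unfolding \<beta>_def dot' pq t_def using l1 by (simp add: field_simps)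
    qed
    have "x3 = f \<beta>" unfolding x3 f_def y1 y2 by (simp add: algebra_simps)
    then show "x3 \<in> f ` {\<beta>. \<beta>^2 = k}" using hb by auto
  qed
  have kD0: "k = 0 \<longleftrightarrow> D = 0" unfolding k_def using l1 four by simp
  have kDsq: "is_square k \<longleftrightarrow> is_square D"
  proof
    assume "is_square k" then obtain r where "k = r^2" unfolding is_square_def by blast
    then have "D = (r * (2*l1))^2" unfolding k_def using l1 char four
      by (simp add: field_simps power2_eq_square)
    then show "is_square D" unfolding is_square_def by blast
  next
    assume "is_square D" then obtain r where "D = r^2" unfolding is_square_def by blast
    then have "k = (r / (2*l1))^2" unfolding k_def using l1 char four
      by (simp add: field_simps power2_eq_square)
    then show "is_square k" unfolding is_square_def by blast
  qed
  have "card (f ` {\<beta>. \<beta>^2 = k}) = card {\<beta>. \<beta>^2 = k}"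
    using inj by (simp add: card_image inj_on_subset)
  then show ?thesis
    unfolding set_eq D_def[symmetric]
    using card_sq[OF char, of k] kD0 kDsq by auto
qed

end
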